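(* Let $n\ge 3$. There exists a vertex $w$ of $D_n$ of minimum degree $\delta(D_n)$ such that $\frac n2<w<n$.
   Context: $D_n$ is the graph with vertex set $\{1,\dots,n\}$ in which distinct $a,b$ are adjacent iff $\gcd(a,b)\mid n$ (the maximal Diophantine graph of order $n$; each vertex is identified with its label). $\delta(G)$ denotes the minimum degree of $G$. *)

theory Defs
  imports Main
begin

definition Dn_adj :: "nat \<Rightarrow> nat \<Rightarrow> nat \<Rightarrow> bool" where
  "Dn_adj n a b \<longleftrightarrow> a \<in> {1..n} \<and> b \<in> {1..n} \<and> a \<noteq> b \<and> gcd a b dvd n"

definition Dn_deg :: "nat \<Rightarrow> nat \<Rightarrow> nat" where
  "Dn_deg n v = card {u \<in> {1..n}. Dn_adj n v u}"

definition Dn_min_deg :: "nat \<Rightarrow> nat" where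
  "Dn_min_deg n = Min (Dn_deg n ` {1..n})"

end

theory Submission
  imports Defs
begin

lemma deg_le_all:
  assumes "n \<ge> 3" "v \<in> {1..n}" "v dvd n" "w \<in> {1..n}"
  shows "Dn_deg n w \<le> Dn_deg n v"
proof -
  have "{u \<in> {1..n}. Dn_adj n w u} \<subseteq> {1..n} - {w}"
    by (auto simp: Dn_adj_def)
  hence "Dn_deg n w \<le> card ({1..n} - {w})"
    unfolding Dn_deg_def by (intro card_mono) auto
  also have "\<dots> = card ({1..n} - {v})" using assms by simp
  also have "{1..n} - {v} = {u \<in> {1..n}. Dn_adj n v u}"
    using assms by (auto simp: Dn_adj_def intro: dvd_trans)
  finally show ?thesis unfolding Dn_deg_def .
qed

lemma deg_mult:
  assumes "v \<in> {1..n}" "\<not> v dvd n" "v dvd w" "w \<in> {1..n}"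
  shows "Dn_deg n w \<le> Dn_deg n v"
proof -
  have "{u \<in> {1..n}. Dn_adj n w u} \<subseteq> {u \<in> {1..n}. Dn_adj n v u}"
  proof
    fix u assume u: "u \<in> {u \<in> {1..n}. Dn_adj n w u}"
    hence g: "gcd w u dvd n" "u \<noteq> w" by (auto simp: Dn_adj_def)
    have "gcd v u dvd gcd w u" using assms(3) by (meson gcd_dvd1 gcd_dvd2 gcd_greatest dvd_trans)
    hence gv: "gcd v u dvd n" using g dvd_trans by blast
    have "u \<noteq> v" using gv assms(2) by auto
    thus "u \<in> {u \<in> {1..n}. Dn_adj n v u}" using u gv assms by (auto simp: Dn_adj_def)
  qed
  thus ?thesis unfolding Dn_deg_def by (intro card_mono) auto
qed

theorem mainTheorem16:
  fixes n :: nat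
  assumes "n \<ge> 3"
  shows "\<exists>w \<in> {1..n}. Dn_deg n w = Dn_min_deg n \<and> n < 2 * w \<and> w < n"
proof -
  have fin: "finite (Dn_deg n ` {1..n})" "Dn_deg n ` {1..n} \<noteq> {}" using assms by auto
  have "Dn_min_deg n \<in> Dn_deg n ` {1..n}" unfolding Dn_min_deg_def using fin by (rule Min_in)
  then obtain v where v: "v \<in> {1..n}" "Dn_deg n v = Dn_min_deg n" by auto
  have minle: "\<And>x. x \<in> {1..n} \<Longrightarrow> Dn_min_deg n \<le> Dn_deg n x"
    unfolding Dn_min_deg_def using fin by auto
  show ?thesis
  proof (cases "v dvd n")
    case True
    have w: "n - 1 \<in> {1..n}" using assms by auto
    have "Dn_deg n (n-1) \<le> Dn_deg n v" using deg_le_all[OF assms v(1) True w] .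
    hence "Dn_deg n (n-1) = Dn_min_deg n" using minle[OF w] v by simp
    thus ?thesis using w assms by (intro bexI[of _ "n-1"]) auto
  next
    case False
    define w where "w = (n div v) * v"
    have vpos: "v > 0" "v \<le> n" using v by auto
    have "n div v \<ge> 1" using vpos by (metis One_nat_def Suc_leI div_greater_zero_iff)
    hence wv: "w \<ge> v" unfolding w_def by simp
    have "w \<le> n" unfolding w_def by (metis div_mult_mod_eq le_add1)
    have "n = w + n mod v" unfolding w_def by simp
    moreover have "n mod v < v" using vpos by simp
    ultimately have lt: "n < w + v" by linarith
    have "w \<noteq> n" using False unfolding w_def by (metis dvd_triv_right)
    have wi: "w \<in> {1..n}" using wv vpos \<open>w \<le> n\<close> by auto
    have "Dn_deg n w \<le> Dn_deg n v" using deg_mult[OF v(1) False _ wi] unfolding w_def by simp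
    hence "Dn_deg n w = Dn_min_deg n" using minle[OF wi] v by simp
    thus ?thesis using wi lt wv \<open>w \<noteq> n\<close> \<open>w \<le> n\<close> by (intro bexI[of _ w]) auto
  qed
qed

end
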